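(* Let $A$ be a partial ring and $a,b\in A$. If $D(b)\subseteq D(a)$, then there exists $k\in\mathbb{N}$ such that $b^k\in(a)$.
   Context: A partial ring is a set $A$ with $0$, a set $A_2\subseteq A\times A$ of summable pairs and a partial addition ($0$ a unit summable with everything; commutative; associative in the sense: $(a,b),(a+b,c)\in A_2$ iff $(b,c),(a,b+c)\in A_2$, and then $(a+b)+c=a+(b+c)$), with a commutative associative multiplication with unit $1$ such that $0\cdot a=0$ and $(a_1,a_2)\in A_2\Rightarrow(a_1x,a_2x)\in A_2$, $(a_1+a_2)x=a_1x+a_2x$. A tuple $(c_1,\dots,c_r)$ is summable if $c_1+\dots+c_r$ can be calculated in $A$. The ideal $(a)$ is $\{c_1a+\dots+c_ra: r\in\mathbb{N}, c_i\in A, (c_1a,\dots,c_ra)\text{ summable}\}$. A prime ideal is a subset $\mathfrak p\ne A$ containing $0$, closed under sums of summable pairs of its elements, with $A\mathfrak p\subseteq\mathfrak p$, and such that $xy\in\mathfrak p$ implies $x\in\mathfrak p$ or $y\in\mathfrak p$. $D(a)$ is the set of prime ideals $\mathfrak p$ with $a\notin\mathfrak p$. *)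

theory Defs
  imports Main
begin

text \<open>A partial ring whose underlying set is the whole type 'a.
  summ x y means (x,y) is in A_2; padd is only meaningful on summable pairs.\<close>
record 'a pring =
  summ :: "'a \<Rightarrow> 'a \<Rightarrow> bool"
  padd :: "'a \<Rightarrow> 'a \<Rightarrow> 'a"
  pzero :: 'a
  pmul :: "'a \<Rightarrow> 'a \<Rightarrow> 'a"
  pone :: 'a

definition partial_ring :: "'a pring \<Rightarrow> bool" where
  "partial_ring R \<longleftrightarrow>
     (\<forall>a. summ R (pzero R) a \<and> summ R a (pzero R) \<and> padd R (pzero R) a = a \<and> padd R a (pzero R) = a) \<and>
     (\<forall>a b. summ R a b \<longrightarrow> summ R b a \<and> padd R a b = padd R b a) \<and>
     (\<forall>a b c. (summ R a b \<and> summ R (padd R a b) c) \<longleftrightarrow> (summ R b c \<and> summ R a (padd R b c))) \<and>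
     (\<forall>a b c. summ R a b \<and> summ R (padd R a b) c \<longrightarrow>
               padd R (padd R a b) c = padd R a (padd R b c)) \<and>
     (\<forall>a b. pmul R a b = pmul R b a) \<and>
     (\<forall>a b c. pmul R (pmul R a b) c = pmul R a (pmul R b c)) \<and>
     (\<forall>a. pmul R (pone R) a = a) \<and>
     (\<forall>a. pmul R (pzero R) a = pzero R) \<and>
     (\<forall>a1 a2 x. summ R a1 a2 \<longrightarrow>
        summ R (pmul R a1 x) (pmul R a2 x) \<and>
        pmul R (padd R a1 a2) x = padd R (pmul R a1 x) (pmul R a2 x))"

fun summable_from :: "'a pring \<Rightarrow> 'a \<Rightarrow> 'a list \<Rightarrow> bool" where
  "summable_from R acc [] = True"
| "summable_from R acc (x # xs) = (summ R acc x \<and> summable_from R (padd R acc x) xs)"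

definition tuple_summable :: "'a pring \<Rightarrow> 'a list \<Rightarrow> bool" where
  "tuple_summable R xs = summable_from R (pzero R) xs"

definition tuple_sum :: "'a pring \<Rightarrow> 'a list \<Rightarrow> 'a" where
  "tuple_sum R xs = foldl (padd R) (pzero R) xs"

definition principal_ideal :: "'a pring \<Rightarrow> 'a \<Rightarrow> 'a set" where
  "principal_ideal R a =
     {tuple_sum R (map (\<lambda>c. pmul R c a) cs) | cs. tuple_summable R (map (\<lambda>c. pmul R c a) cs)}"

definition prime_ideal :: "'a pring \<Rightarrow> 'a set \<Rightarrow> bool" where
  "prime_ideal R P \<longleftrightarrow>
     P \<noteq> UNIV \<and> pzero R \<in> P \<and>
     (\<forall>x\<in>P. \<forall>y\<in>P. summ R x y \<longrightarrow> padd R x y \<in> P) \<and>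
     (\<forall>a. \<forall>x\<in>P. pmul R a x \<in> P) \<and>
     (\<forall>x y. pmul R x y \<in> P \<longrightarrow> x \<in> P \<or> y \<in> P)"

definition Dset :: "'a pring \<Rightarrow> 'a \<Rightarrow> 'a set set" where
  "Dset R a = {P. prime_ideal R P \<and> a \<notin> P}"

fun ppow :: "'a pring \<Rightarrow> 'a \<Rightarrow> nat \<Rightarrow> 'a" where
  "ppow R b 0 = pone R"
| "ppow R b (Suc k) = pmul R b (ppow R b k)"

end

theory Submission
  imports Defs
begin

locale prg =
  fixes R :: "'a pring"
  assumes pr: "partial_ring R"
begin

lemma z1: "summ R (pzero R) a" "summ R a (pzero R)" "padd R (pzero R) a = a" "padd R a (pzero R) = a"
  using pr unfolding partial_ring_def by auto
lemma ascomb: "summ R b c \<Longrightarrow> summ R a (padd R b c) \<Longrightarrow>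
   summ R a b \<and> summ R (padd R a b) c \<and> padd R (padd R a b) c = padd R a (padd R b c)"
  using pr unfolding partial_ring_def by metis
lemma mcomm: "pmul R a b = pmul R b a"
  using pr unfolding partial_ring_def by auto
lemma massoc: "pmul R (pmul R a b) c = pmul R a (pmul R b c)"
  using pr unfolding partial_ring_def by auto
lemma mone: "pmul R (pone R) a = a"
  using pr unfolding partial_ring_def by auto
lemma mzero: "pmul R (pzero R) a = pzero R"
  using pr unfolding partial_ring_def by auto
lemma distr: "summ R a1 a2 \<Longrightarrow> summ R (pmul R a1 x) (pmul R a2 x) \<and>
        pmul R (padd R a1 a2) x = padd R (pmul R a1 x) (pmul R a2 x)"
  using pr unfolding partial_ring_def by auto

lemma sf_snoc: "summable_from R acc (xs@[x]) = (summable_from R acc xs \<and> summ R (foldl (padd R) acc xs) x)"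
  by (induction xs arbitrary: acc) auto

lemma sum_app:
  assumes "tuple_summable R ds" "summ R (tuple_sum R cs) (tuple_sum R ds)" "tuple_summable R cs"
  shows "tuple_summable R (cs@ds) \<and> tuple_sum R (cs@ds) = padd R (tuple_sum R cs) (tuple_sum R ds)"
  using assms
proof (induction ds rule: rev_induct)
  case Nil
  then show ?case by (simp add: tuple_sum_def z1)
next
  case (snoc d ds)
  let ?s = "tuple_sum R ds" and ?x = "tuple_sum R cs"
  have h1: "tuple_summable R ds" "summ R ?s d"
    using snoc.prems(1) by (auto simp: tuple_summable_def tuple_sum_def sf_snoc)
  have h2: "summ R ?x (padd R ?s d)" using snoc.prems(2) by (simp add: tuple_sum_def)
  from ascomb[OF h1(2) h2] have h3: "summ R ?x ?s" "summ R (padd R ?x ?s) d"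
    "padd R (padd R ?x ?s) d = padd R ?x (padd R ?s d)" by auto
  from snoc.IH[OF h1(1) h3(1) snoc.prems(3)] have
    ih: "tuple_summable R (cs@ds)" "tuple_sum R (cs@ds) = padd R ?x ?s" by auto
  show ?case using ih h3
    by (simp add: tuple_summable_def tuple_sum_def sf_snoc flip: append_assoc del: append_assoc)
qed

lemma mul_list: "summable_from R acc xs \<Longrightarrow>
  summable_from R (pmul R acc r) (map (\<lambda>z. pmul R z r) xs) \<and>
  foldl (padd R) (pmul R acc r) (map (\<lambda>z. pmul R z r) xs) = pmul R (foldl (padd R) acc xs) r"
proof (induction xs arbitrary: acc)
  case Nil then show ?case by simp
next
  case (Cons x xs)
  then have "summ R acc x" "summable_from R (padd R acc x) xs" by auto
  then have ih: "summable_from R (pmul R (padd R acc x) r) (map (\<lambda>z. pmul R z r) xs)"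
    "foldl (padd R) (pmul R (padd R acc x) r) (map (\<lambda>z. pmul R z r) xs) = pmul R (foldl (padd R) (padd R acc x) xs) r"
    using Cons.IH[of "padd R acc x"] by auto
  have d: "summ R (pmul R acc r) (pmul R x r)" "pmul R (padd R acc x) r = padd R (pmul R acc r) (pmul R x r)"
    using distr[OF \<open>summ R acc x\<close>] by auto
  show ?case using ih d by (simp only: list.map foldl_Cons summable_from.simps)
qed

definition ideal :: "'a set \<Rightarrow> bool" where
  "ideal I \<longleftrightarrow> pzero R \<in> I \<and> (\<forall>x\<in>I. \<forall>y\<in>I. summ R x y \<longrightarrow> padd R x y \<in> I) \<and>
     (\<forall>r. \<forall>x\<in>I. pmul R r x \<in> I)"

lemma principal_ideal: "ideal (principal_ideal R a)"
  unfolding ideal_def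
proof (intro conjI ballI allI impI)
  show "pzero R \<in> principal_ideal R a"
    unfolding principal_ideal_def
    by (rule CollectI, rule exI[of _ "[]"]) (simp add: tuple_sum_def tuple_summable_def)
next
  fix x y assume "x \<in> principal_ideal R a" "y \<in> principal_ideal R a" and s: "summ R x y"
  then obtain cs ds where c: "x = tuple_sum R (map (\<lambda>c. pmul R c a) cs)"
     "tuple_summable R (map (\<lambda>c. pmul R c a) cs)"
   and d: "y = tuple_sum R (map (\<lambda>c. pmul R c a) ds)"
     "tuple_summable R (map (\<lambda>c. pmul R c a) ds)"
    unfolding principal_ideal_def by auto
  from sum_app[OF d(2) _ c(2)] s c d
  have "tuple_summable R (map (\<lambda>c. pmul R c a) (cs@ds)) \<and>
     tuple_sum R (map (\<lambda>c. pmul R c a) (cs@ds)) = padd R x y" by simp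
  then show "padd R x y \<in> principal_ideal R a" unfolding principal_ideal_def
    by (intro CollectI exI[of _ "cs@ds"]) simp
next
  fix r x assume "x \<in> principal_ideal R a"
  then obtain cs where c: "x = tuple_sum R (map (\<lambda>c. pmul R c a) cs)"
     "tuple_summable R (map (\<lambda>c. pmul R c a) cs)"
    unfolding principal_ideal_def by auto
  have e: "map (\<lambda>z. pmul R z r) (map (\<lambda>c. pmul R c a) cs) = map (\<lambda>c. pmul R c a) (map (pmul R r) cs)"
  proof -
    have "pmul R (pmul R c a) r = pmul R (pmul R r c) a" for c by (metis massoc mcomm)
    then show ?thesis by simp
  qed
  have "tuple_summable R (map (\<lambda>c. pmul R c a) (map (pmul R r) cs)) \<and>
     tuple_sum R (map (\<lambda>c. pmul R c a) (map (pmul R r) cs)) = pmul R r x"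
  proof -
    have m: "summable_from R (pzero R) (map (\<lambda>z. pmul R z r) (map (\<lambda>c. pmul R c a) cs)) \<and>
      foldl (padd R) (pzero R) (map (\<lambda>z. pmul R z r) (map (\<lambda>c. pmul R c a) cs)) = pmul R x r"
      using mul_list[of "pzero R" "map (\<lambda>c. pmul R c a) cs" r] c
      unfolding tuple_summable_def tuple_sum_def mzero by simp
    show ?thesis using m unfolding e tuple_summable_def tuple_sum_def mcomm[of x r] by simp
  qed
  then show "pmul R r x \<in> principal_ideal R a" unfolding principal_ideal_def
    by (intro CollectI exI[of _ "map (pmul R r) cs"]) simp
qed

lemma a_in: "a \<in> principal_ideal R a"
  unfolding principal_ideal_def
  by (rule CollectI, rule exI[of _ "[pone R]"]) (simp add: tuple_sum_def tuple_summable_def z1 mone)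

lemma colon_ideal: assumes "ideal I" shows "ideal {z. pmul R z w \<in> I}"
  unfolding ideal_def
proof (intro conjI ballI allI impI)
  show "pzero R \<in> {z. pmul R z w \<in> I}" using assms unfolding ideal_def by (simp add: mzero)
next
  fix x y assume "x \<in> {z. pmul R z w \<in> I}" "y \<in> {z. pmul R z w \<in> I}" "summ R x y"
  then show "padd R x y \<in> {z. pmul R z w \<in> I}" using assms distr[of x y w] unfolding ideal_def by simp
next
  fix r x assume "x \<in> {z. pmul R z w \<in> I}"
  then show "pmul R r x \<in> {z. pmul R z w \<in> I}" using assms unfolding ideal_def by (simp add: massoc)
qed

lemma ppow_add: "pmul R (ppow R b n) (ppow R b m) = ppow R b (n+m)"
  by (induction n) (auto simp: mone massoc)

end

theorem mainTheorem18:
  fixes R :: "'a pring" and a b :: 'a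
  assumes "partial_ring R"
    and "Dset R b \<subseteq> Dset R a"
  shows "\<exists>k::nat. ppow R b k \<in> principal_ideal R a"
proof (rule ccontr)
  interpret prg R by (standard, fact assms(1))
  assume nk: "\<not> (\<exists>k. ppow R b k \<in> principal_ideal R a)"
  define F where "F = {I. ideal I \<and> a \<in> I \<and> (\<forall>k. ppow R b k \<notin> I)}"
  have "F \<noteq> {}" using nk principal_ideal a_in unfolding F_def by blast
  moreover have "\<Union>C \<in> F" if "C \<noteq> {}" "subset.chain F C" for C
  proof -
    have ch: "C \<subseteq> F" "\<forall>X\<in>C. \<forall>Y\<in>C. X \<subseteq> Y \<or> Y \<subseteq> X"
      using that(2) unfolding subset_chain_def by auto
    have "ideal (\<Union>C)" unfolding ideal_def
    proof (intro conjI ballI allI impI)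
      show "pzero R \<in> \<Union>C" using that(1) ch(1) unfolding F_def ideal_def by blast
    next
      fix x y assume "x \<in> \<Union>C" "y \<in> \<Union>C" "summ R x y"
      then obtain X Y where "X \<in> C" "Y \<in> C" "x \<in> X" "y \<in> Y" by auto
      with ch have "x \<in> X \<and> y \<in> X \<or> x \<in> Y \<and> y \<in> Y" by blast
      then show "padd R x y \<in> \<Union>C" using \<open>X \<in> C\<close> \<open>Y \<in> C\<close> ch(1) \<open>summ R x y\<close>
        unfolding F_def ideal_def by blast
    next
      fix r x assume "x \<in> \<Union>C"
      then show "pmul R r x \<in> \<Union>C" using ch(1) unfolding F_def ideal_def by blast
    qed
    then show ?thesis using that(1) ch(1) unfolding F_def by blast
  qed
  ultimately obtain P where P: "P \<in> F" and mx: "\<And>X. X \<in> F \<Longrightarrow> P \<subseteq> X \<Longrightarrow> X = P"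
    using subset_Zorn_nonempty[of F] by blast
  have Pi: "ideal P" "a \<in> P" "\<And>k. ppow R b k \<notin> P" using P unfolding F_def by auto
  have sub: "P \<subseteq> {z. pmul R z w \<in> P}" for w
  proof
    fix z assume "z \<in> P"
    then have "pmul R w z \<in> P" using Pi(1) unfolding ideal_def by blast
    then have "pmul R z w \<in> P" by (subst mcomm)
    then show "z \<in> {z. pmul R z w \<in> P}" by simp
  qed
  have key: "\<exists>k. pmul R (ppow R b k) w \<in> P" if "w \<notin> P" "z \<notin> P" "pmul R z w \<in> P" for w z
  proof (rule ccontr)
    assume "\<not> ?thesis"
    then have "{z. pmul R z w \<in> P} \<in> F" using colon_ideal[OF Pi(1)] sub Pi(2) unfolding F_def by auto
    then have "{z. pmul R z w \<in> P} = P" using mx[OF _ sub] by simp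
    then show False using that by auto
  qed
  have prime: "prime_ideal R P" unfolding prime_ideal_def
  proof (intro conjI allI impI ballI)
    show "P \<noteq> UNIV" using Pi(3) by auto
    show "pzero R \<in> P" using Pi(1) unfolding ideal_def by auto
    show "\<And>x y. x \<in> P \<Longrightarrow> y \<in> P \<Longrightarrow> summ R x y \<Longrightarrow> padd R x y \<in> P"
      using Pi(1) unfolding ideal_def by auto
    show "\<And>r x. x \<in> P \<Longrightarrow> pmul R r x \<in> P" using Pi(1) unfolding ideal_def by auto
    fix x y assume xy: "pmul R x y \<in> P"
    show "x \<in> P \<or> y \<in> P"
    proof (rule ccontr)
      assume "\<not> (x \<in> P \<or> y \<in> P)"
      then have nx: "x \<notin> P" and ny: "y \<notin> P" by auto
      obtain m where m: "pmul R (ppow R b m) y \<in> P" using key[OF ny nx xy] by blast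
      have "pmul R y (ppow R b m) \<in> P" using m by (simp add: mcomm)
      obtain n where "pmul R (ppow R b n) (ppow R b m) \<in> P"
        using key[OF Pi(3)[of m] ny \<open>pmul R y (ppow R b m) \<in> P\<close>] by blast
      then show False using Pi(3)[of "n+m"] ppow_add[where n=n and m=m] by simp
    qed
  qed
  have "ppow R b 1 = b" using mcomm[of b "pone R"] mone[of b] by simp
  then have "b \<notin> P" using Pi(3)[of 1] by simp
  then have "P \<in> Dset R a" using assms(2) prime unfolding Dset_def by auto
  then show False using Pi(2) unfolding Dset_def by auto
qed

end
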